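(* As formal power series in $y$, \[ \sum_{n\ge0}H_n(x)y^n=\frac{2+y}{1-xy^2(1+y)}-(1-x)y-1, \] and the $(1,2,3)$-Padovan numbers satisfy \[ \sum_{n\ge0}p'_ny^n=\frac{1+2y+2y^2}{1-y^2-y^3}. \]
   Context: For $n\ge1$ let $\Xi_n$ be the poset on $\{x_1,\dots,x_n\}$ whose cover relations are exactly: $x_2\prec x_1$, $x_3\prec x_2$, and for $3\le i\le n-1$, $x_i\prec x_{i+1}$ if $i$ is odd and $x_{i+1}\prec x_i$ if $i$ is even (so $x_1>x_2>x_3<x_4>x_5<\cdots$). A filter of a poset is an up-closed subset. The matchable Lucas cube $\Omega_n$ is the graph whose vertices are the filters of $\Xi_n$, two filters adjacent iff one is obtained from the other by deleting a single element; $\Omega_0$ is the one-vertex graph. $h_{n,k}$ is the number of maximal induced $k$-dimensional hypercubes in $\Omega_n$ (induced $k$-cubes not contained in an induced $(k+1)$-cube), and $H_n(x)=\sum_{k\ge0}h_{n,k}x^k$ is the maximal cube polynomial. The $(1,2,3)$-Padovan numbers are $p'_0=1$, $p'_1=2$, $p'_2=3$, $p'_n=p'_{n-2}+p'_{n-3}$ for $n\ge3$. *)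

theory Defs
  imports "HOL-Computational_Algebra.Formal_Power_Series"
begin

text \<open>Element x_i of Xi_n is represented by the index i in {1..n}.
  xi_cover n i j means x_i is covered by x_j (x_i \<prec> x_j).\<close>
definition xi_cover :: "nat \<Rightarrow> nat \<Rightarrow> nat \<Rightarrow> bool" where
  "xi_cover n i j \<longleftrightarrow> i \<le> n \<and> j \<le> n \<and>
     ((i = 2 \<and> j = 1) \<or> (i = 3 \<and> j = 2) \<or>
      (3 \<le> i \<and> i \<le> n - 1 \<and> odd i \<and> j = i + 1) \<or>
      (3 \<le> j \<and> j \<le> n - 1 \<and> even j \<and> i = j + 1))"

definition xi_le :: "nat \<Rightarrow> nat \<Rightarrow> nat \<Rightarrow> bool" where
  "xi_le n = (xi_cover n)\<^sup>*\<^sup>*"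

definition xi_filter :: "nat \<Rightarrow> nat set \<Rightarrow> bool" where
  "xi_filter n F \<longleftrightarrow> F \<subseteq> {1..n} \<and>
     (\<forall>a\<in>F. \<forall>b\<in>{1..n}. xi_le n a b \<longrightarrow> b \<in> F)"

definition omega_verts :: "nat \<Rightarrow> nat set set" where
  "omega_verts n = {F. xi_filter n F}"

definition omega_adj :: "nat set \<Rightarrow> nat set \<Rightarrow> bool" where
  "omega_adj F G \<longleftrightarrow> (\<exists>a\<in>F. G = F - {a}) \<or> (\<exists>a\<in>G. F = G - {a})"

definition induced_cube :: "'v set \<Rightarrow> ('v \<Rightarrow> 'v \<Rightarrow> bool) \<Rightarrow> nat \<Rightarrow> 'v set \<Rightarrow> bool" where
  "induced_cube V adj k S \<longleftrightarrow> S \<subseteq> V \<and>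
     (\<exists>f. bij_betw f (Pow {..<k}) S \<and>
        (\<forall>A\<in>Pow {..<k}. \<forall>B\<in>Pow {..<k}.
            adj (f A) (f B) \<longleftrightarrow> card ((A - B) \<union> (B - A)) = 1))"

definition maximal_cube :: "'v set \<Rightarrow> ('v \<Rightarrow> 'v \<Rightarrow> bool) \<Rightarrow> nat \<Rightarrow> 'v set \<Rightarrow> bool" where
  "maximal_cube V adj k S \<longleftrightarrow> induced_cube V adj k S \<and>
     \<not> (\<exists>S'. induced_cube V adj (Suc k) S' \<and> S \<subseteq> S')"

definition h :: "nat \<Rightarrow> nat \<Rightarrow> nat" where
  "h n k = card {S. maximal_cube (omega_verts n) omega_adj k S}"

definition H :: "nat \<Rightarrow> real \<Rightarrow> real" where
  "H n x = (\<Sum>k\<in>{k. h n k \<noteq> 0}. real (h n k) * x ^ k)"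

fun padovan :: "nat \<Rightarrow> nat" where
  "padovan 0 = 1"
| "padovan (Suc 0) = 2"
| "padovan (Suc (Suc 0)) = 3"
| "padovan (Suc (Suc (Suc n))) = padovan (Suc n) + padovan n"

end

theory Submission
  imports Defs
begin


definition sd :: "'a set \<Rightarrow> 'a set \<Rightarrow> 'a set" where
  "sd A B = (A - B) \<union> (B - A)"

lemma sd_comm: "sd A B = sd B A" by (auto simp: sd_def)
lemma sd_assoc: "sd (sd A B) C = sd A (sd B C)" by (auto simp: sd_def)
lemma sd_self[simp]: "sd A A = {}" by (auto simp: sd_def)
lemma sd_empty[simp]: "sd A {} = A" "sd {} A = A" by (auto simp: sd_def)
lemma sd_cancel[simp]: "sd A (sd A B) = B" by (auto simp: sd_def)

lemma sd2: "sd X U = {a} \<Longrightarrow> sd X W = {c} \<Longrightarrow> sd U W = sd {a} {c}"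
  unfolding sd_def by (auto simp: set_eq_iff)
lemma sd_solve: "sd X U = {a} \<Longrightarrow> X = sd U {a}"
  unfolding sd_def by (auto simp: set_eq_iff)

lemma omega_adj_sd: "omega_adj F G \<longleftrightarrow> card (sd F G) = 1"
proof
  assume "omega_adj F G"
  then show "card (sd F G) = 1" unfolding omega_adj_def
  proof (elim disjE bexE)
    fix a assume "a \<in> F" "G = F - {a}"
    then have "sd F G = {a}" unfolding sd_def by auto
    then show ?thesis by simp
  next
    fix a assume "a \<in> G" "F = G - {a}"
    then have "sd F G = {a}" unfolding sd_def by auto
    then show ?thesis by simp
  qed
next
  assume "card (sd F G) = 1"
  then obtain a where a: "sd F G = {a}" by (auto simp: card_1_singleton_iff)
  show "omega_adj F G"
  proof (cases "a \<in> F")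
    case True
    then have "G = F - {a}" using a unfolding sd_def by (auto simp: set_eq_iff)
    then show ?thesis using True unfolding omega_adj_def by (intro disjI1 bexI[of _ a])
  next
    case False
    then have "a \<in> G \<and> F = G - {a}" using a unfolding sd_def set_eq_iff
      by (metis DiffE DiffI UnCI UnE singletonD singletonI)
    then show ?thesis unfolding omega_adj_def by (intro disjI2 bexI[of _ a]) auto
  qed
qed

definition cube :: "'a set \<Rightarrow> 'a set \<Rightarrow> 'a set set" where
  "cube G E = (\<lambda>B. G \<union> B) ` Pow E"

lemma induced_cube_easy:
  assumes "G \<inter> E = {}" "finite E" "card E = k" "cube G E \<subseteq> V"
  shows "induced_cube V omega_adj k (cube G E)"
proof -
  obtain b where b: "bij_betw b {0..<card E} E" using ex_bij_betw_nat_finite[OF assms(2)] by blast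
  have b': "bij_betw b {..<k} E" using b assms(3) by (simp add: lessThan_atLeast0)
  have inj: "inj_on b {..<k}" and img: "b ` {..<k} = E" using b' by (auto simp: bij_betw_def)
  define f where "f A = G \<union> b ` A" for A
  have "inj_on f (Pow {..<k})"
  proof (rule inj_onI)
    fix A B assume A: "A \<in> Pow {..<k}" and B: "B \<in> Pow {..<k}" and e: "f A = f B"
    have "b ` A \<subseteq> E" "b ` B \<subseteq> E" using A B img by auto
    then have "b ` A = b ` B" using e assms(1) unfolding f_def by blast
    then show "A = B" using inj A B by (simp add: inj_on_image_eq_iff)
  qed
  moreover have "f ` Pow {..<k} = cube G E"
  proof
    show "f ` Pow {..<k} \<subseteq> cube G E" using img unfolding f_def cube_def by auto
    show "cube G E \<subseteq> f ` Pow {..<k}"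
    proof
      fix S assume "S \<in> cube G E"
      then obtain C where C: "C \<subseteq> E" "S = G \<union> C" unfolding cube_def by auto
      then obtain A where "A \<subseteq> {..<k}" "C = b ` A" using img by (auto simp: subset_image_iff)
      then show "S \<in> f ` Pow {..<k}" using C unfolding f_def by auto
    qed
  qed
  ultimately have bij: "bij_betw f (Pow {..<k}) (cube G E)" by (simp add: bij_betw_def)
  have adj: "omega_adj (f A) (f B) \<longleftrightarrow> card (sd A B) = 1"
    if A: "A \<in> Pow {..<k}" and B: "B \<in> Pow {..<k}" for A B
  proof -
    have "b ` A \<subseteq> E" "b ` B \<subseteq> E" using A B img by auto
    then have "sd (f A) (f B) = sd (b ` A) (b ` B)" using assms(1) unfolding f_def sd_def by blast
    also have "\<dots> = b ` (sd A B)" unfolding sd_def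
      using inj_on_image_set_diff[OF inj, of A B] inj_on_image_set_diff[OF inj, of B A] A B
      by (auto simp: image_Un)
    finally have eq: "sd (f A) (f B) = b ` (sd A B)" .
    have "sd A B \<subseteq> {..<k}" using A B by (auto simp: sd_def)
    then have "card (sd (f A) (f B)) = card (sd A B)"
      unfolding eq by (rule card_image[OF inj_on_subset[OF inj]])
    then show ?thesis by (simp add: omega_adj_sd)
  qed
  show ?thesis unfolding induced_cube_def
  proof (intro conjI exI[of _ f] ballI)
    show "cube G E \<subseteq> V" by (rule assms(4))
    show "bij_betw f (Pow {..<k}) (cube G E)" by (rule bij)
    fix A B assume A: "A \<in> Pow {..<k}" and B: "B \<in> Pow {..<k}"
    show "omega_adj (f A) (f B) \<longleftrightarrow> card ((A - B) \<union> (B - A)) = 1"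
      using adj[OF A B] unfolding sd_def .
  qed
qed

lemma induced_cube_hard:
  assumes "induced_cube V omega_adj k S"
  shows "\<exists>G E. S = cube G E \<and> G \<inter> E = {} \<and> finite E \<and> card E = k \<and> cube G E \<subseteq> V"
proof -
  from assms obtain f where SV: "S \<subseteq> V" and bij: "bij_betw f (Pow {..<k}) S"
    and adj: "\<And>A B. A \<in> Pow {..<k} \<Longrightarrow> B \<in> Pow {..<k} \<Longrightarrow>
            omega_adj (f A) (f B) \<longleftrightarrow> card ((A - B) \<union> (B - A)) = 1"
    unfolding induced_cube_def by blast
  have adj': "card (sd (f A) (f B)) = 1" if "A \<subseteq> {..<k}" "B \<subseteq> {..<k}" "card (sd A B) = 1" for A B
    using adj[of A B] that by (simp add: omega_adj_sd sd_def)
  have injf: "inj_on f (Pow {..<k})" and imgf: "f ` Pow {..<k} = S" using bij by (auto simp: bij_betw_def)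
  define F0 where "F0 = f {}"
  have "\<forall>i\<in>{..<k}. \<exists>a. sd F0 (f {i}) = {a}"
  proof
    fix i assume i: "i \<in> {..<k}"
    have "card (sd F0 (f {i})) = 1" unfolding F0_def using i by (intro adj') (auto simp: sd_def)
    then show "\<exists>a. sd F0 (f {i}) = {a}" by (simp add: card_1_singleton_iff)
  qed
  then obtain e where e: "\<forall>i\<in>{..<k}. sd F0 (f {i}) = {e i}"
    using bchoice[of "{..<k}" "\<lambda>i a. sd F0 (f {i}) = {a}"] by blast
  have fi: "f {i} = sd F0 {e i}" if "i \<in> {..<k}" for i
    using e that sd_cancel[of F0 "f {i}"] by simp
  have inje: "inj_on e {..<k}"
  proof (rule inj_onI)
    fix i j assume i: "i \<in> {..<k}" and j: "j \<in> {..<k}" and "e i = e j"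
    then have "f {i} = f {j}" using fi by simp
    then have "{i} = {j}" using injf i j by (auto dest: inj_onD)
    then show "i = j" by simp
  qed
  have main: "f A = sd F0 (e ` A)" if "A \<subseteq> {..<k}" for A
    using that
  proof (induction "card A" arbitrary: A rule: less_induct)
    case less
    have finA: "finite A" using less.prems finite_subset by blast
    show ?case
    proof (cases "card A \<le> 1")
      case True
      then have "A = {} \<or> (\<exists>i. A = {i})" using finA
        by (auto simp: le_Suc_eq card_1_singleton_iff)
      then show ?thesis
        using fi less.prems unfolding F0_def by auto
    next
      case False
      then obtain i j where ij: "i \<in> A" "j \<in> A" "i \<noteq> j"
        using finA by (auto simp: card_le_Suc0_iff_eq)
      have ik: "i \<in> {..<k}" "j \<in> {..<k}" using ij less.prems by auto
      have cA: "card (A - {i}) < card A" "card (A - {j}) < card A" "card (A - {i, j}) < card A"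
        using ij finA card_gt_0_iff[of A] by auto
      have U: "f (A - {i}) = sd F0 (e ` (A - {i}))" using less cA by auto
      have W: "f (A - {j}) = sd F0 (e ` (A - {j}))" using less cA by auto
      have Z: "f (A - {i, j}) = sd F0 (e ` (A - {i, j}))" using less cA by auto
      have sdi: "sd A (A - {i}) = {i}" "sd A (A - {j}) = {j}" using ij by (auto simp: sd_def)
      have "card (sd (f A) (f (A - {i}))) = 1"
        using less.prems ij by (intro adj') (auto simp: sdi)
      then obtain a where a: "sd (f A) (f (A - {i})) = {a}" by (auto simp: card_1_singleton_iff)
      have "card (sd (f A) (f (A - {j}))) = 1"
        using less.prems ij by (intro adj') (auto simp: sdi)
      then obtain c where c: "sd (f A) (f (A - {j})) = {c}" by (auto simp: card_1_singleton_iff)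
      have inA: "inj_on e A" using inje less.prems inj_on_subset by blast
      have eAi: "e ` (A - {i}) = e ` A - {e i}" and eAj: "e ` (A - {j}) = e ` A - {e j}"
        and eAij: "e ` (A - {i, j}) = e ` A - {e i, e j}"
        using inA ij by (auto simp: inj_on_image_set_diff inj_on_def)
      have eij: "e i \<noteq> e j" using inje ik ij by (auto dest: inj_onD)
      have XU: "f A = sd (f (A - {i})) {a}" using a by (rule sd_solve)
      have "sd (f (A - {i})) (f (A - {j})) = sd {a} {c}"
        using a c by (rule sd2)
      moreover have "sd (f (A - {i})) (f (A - {j})) = {e i, e j}"
        unfolding U W eAi eAj using ij eij by (auto simp: sd_def)
      ultimately have ac: "sd {a} {c} = {e i, e j}" by simp
      then have "a = e i \<or> a = e j" by (auto simp: sd_def)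
      then show ?thesis
      proof
        assume "a = e i"
        then show ?thesis unfolding XU U eAi using ij by (auto simp: sd_def)
      next
        assume "a = e j"
        then have "f A = f (A - {i, j})" unfolding XU U Z eAi eAij using ij eij by (auto simp: sd_def)
        then have "A = A - {i, j}" using injf less.prems by (auto dest: inj_onD)
        then show ?thesis using ij by auto
      qed
    qed
  qed
  define E where "E = e ` {..<k}"
  define G where "G = F0 - E"
  have "S = (\<lambda>C. sd F0 C) ` Pow E"
  proof -
    have "S = (\<lambda>A. sd F0 (e ` A)) ` Pow {..<k}" using imgf main by auto
    also have "\<dots> = (\<lambda>C. sd F0 C) ` Pow E" unfolding E_def
      by (auto simp: subset_image_iff image_iff)
    finally show ?thesis .
  qed
  also have "\<dots> = cube G E"
  proof
    show "(\<lambda>C. sd F0 C) ` Pow E \<subseteq> cube G E"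
    proof
      fix S assume "S \<in> (\<lambda>C. sd F0 C) ` Pow E"
      then obtain C where C: "C \<subseteq> E" "S = sd F0 C" by auto
      have "S = G \<union> sd (F0 \<inter> E) C" "sd (F0 \<inter> E) C \<subseteq> E"
        using C unfolding G_def sd_def by auto
      then show "S \<in> cube G E" unfolding cube_def by blast
    qed
    show "cube G E \<subseteq> (\<lambda>C. sd F0 C) ` Pow E"
    proof
      fix S assume "S \<in> cube G E"
      then obtain B where B: "B \<subseteq> E" "S = G \<union> B" unfolding cube_def by auto
      have "S = sd F0 (sd (F0 \<inter> E) B)" "sd (F0 \<inter> E) B \<subseteq> E"
        using B unfolding G_def sd_def by auto
      then show "S \<in> (\<lambda>C. sd F0 C) ` Pow E" by blast
    qed
  qed
  finally have S: "S = cube G E" .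
  have "card E = k" unfolding E_def using inje by (simp add: card_image)
  moreover have "finite E" unfolding E_def by simp
  moreover have "G \<inter> E = {}" unfolding G_def by auto
  ultimately show ?thesis using S SV by blast
qed



lemma cube_mem: "B \<subseteq> E \<Longrightarrow> G \<union> B \<in> cube G E" unfolding cube_def by auto

lemma cube_sub:
  assumes "G \<inter> E = {}" "G' \<inter> E' = {}" "cube G E \<subseteq> cube G' E'"
  shows "G' \<subseteq> G \<and> E \<subseteq> E' \<and> G \<subseteq> G' \<union> E'"
proof -
  have "G \<in> cube G' E'" using assms(3) cube_mem[of "{}" E G] by auto
  then obtain B0 where B0: "B0 \<subseteq> E'" "G = G' \<union> B0" unfolding cube_def by auto
  have "G \<union> E \<in> cube G' E'" using assms(3) cube_mem[of E E G] by auto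
  then obtain B1 where B1: "B1 \<subseteq> E'" "G \<union> E = G' \<union> B1" unfolding cube_def by auto
  show ?thesis using B0 B1 assms(1,2) by blast
qed

definition closedc :: "('a \<Rightarrow> 'a \<Rightarrow> bool) \<Rightarrow> 'a set \<Rightarrow> bool" where
  "closedc c F \<longleftrightarrow> (\<forall>i j. c i j \<longrightarrow> i \<in> F \<longrightarrow> j \<in> F)"

definition AddS :: "'a set \<Rightarrow> ('a \<Rightarrow> 'a \<Rightarrow> bool) \<Rightarrow> 'a set \<Rightarrow> 'a set" where
  "AddS U c G = {b \<in> U - G. \<forall>j. c b j \<longrightarrow> j \<in> G}"

definition ValidS :: "'a set \<Rightarrow> ('a \<Rightarrow> 'a \<Rightarrow> bool) \<Rightarrow> 'a set \<Rightarrow> bool" where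
  "ValidS U c G \<longleftrightarrow> G \<subseteq> U \<and> closedc c G \<and> (\<forall>b\<in>G. \<exists>i\<in>G \<union> AddS U c G. c i b)"

lemma cube_in_filters:
  assumes irr: "\<And>i. \<not> c i i" and dis: "G \<inter> E = {}"
  shows "cube G E \<subseteq> {F. F \<subseteq> U \<and> closedc c F} \<longleftrightarrow>
         G \<union> E \<subseteq> U \<and> closedc c G \<and> (\<forall>i\<in>E. \<forall>j. c i j \<longrightarrow> j \<in> G)"
proof
  assume H: "cube G E \<subseteq> {F. F \<subseteq> U \<and> closedc c F}"
  have 1: "G \<union> E \<subseteq> U" using H cube_mem[of E E G] by auto
  have 2: "closedc c G" using H cube_mem[of "{}" E G] by auto
  have 3: "j \<in> G" if "i \<in> E" "c i j" for i j
  proof -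
    have "closedc c (G \<union> {i})" using H cube_mem[of "{i}" E G] that by auto
    then have "j \<in> G \<union> {i}" using that unfolding closedc_def by blast
    then show ?thesis using irr that by auto
  qed
  show "G \<union> E \<subseteq> U \<and> closedc c G \<and> (\<forall>i\<in>E. \<forall>j. c i j \<longrightarrow> j \<in> G)" using 1 2 3 by blast
next
  assume "G \<union> E \<subseteq> U \<and> closedc c G \<and> (\<forall>i\<in>E. \<forall>j. c i j \<longrightarrow> j \<in> G)"
  then show "cube G E \<subseteq> {F. F \<subseteq> U \<and> closedc c F}"
    unfolding cube_def closedc_def by blast
qed

lemma induced_cube_iff:
  "induced_cube V omega_adj k S \<longleftrightarrow>
   (\<exists>G E. S = cube G E \<and> G \<inter> E = {} \<and> finite E \<and> card E = k \<and> cube G E \<subseteq> V)"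
  using induced_cube_hard induced_cube_easy by metis

lemma maximal_iff:
  "maximal_cube V omega_adj k S \<longleftrightarrow>
   (\<exists>G E. S = cube G E \<and> G \<inter> E = {} \<and> finite E \<and> card E = k \<and> cube G E \<subseteq> V \<and>
      (\<forall>b. b \<notin> G \<union> E \<longrightarrow> \<not> cube G (insert b E) \<subseteq> V) \<and>
      (\<forall>b\<in>G. \<not> cube (G - {b}) (insert b E) \<subseteq> V))"
proof
  assume M: "maximal_cube V omega_adj k S"
  then obtain G E where GE: "S = cube G E" "G \<inter> E = {}" "finite E" "card E = k" "cube G E \<subseteq> V"
    unfolding maximal_cube_def induced_cube_iff by metis
  have no: "\<not> (\<exists>S'. induced_cube V omega_adj (Suc k) S' \<and> S \<subseteq> S')"
    using M unfolding maximal_cube_def by blast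
  have A: "\<not> cube G (insert b E) \<subseteq> V" if "b \<notin> G \<union> E" for b
  proof
    assume "cube G (insert b E) \<subseteq> V"
    then have "induced_cube V omega_adj (Suc k) (cube G (insert b E))"
      using GE that by (intro induced_cube_easy) auto
    moreover have "S \<subseteq> cube G (insert b E)" unfolding GE cube_def by auto
    ultimately show False using no by blast
  qed
  have B: "\<not> cube (G - {b}) (insert b E) \<subseteq> V" if "b \<in> G" for b
  proof
    assume "cube (G - {b}) (insert b E) \<subseteq> V"
    moreover have "b \<notin> E" using GE that by auto
    ultimately have "induced_cube V omega_adj (Suc k) (cube (G - {b}) (insert b E))"
      using GE that by (intro induced_cube_easy) auto
    moreover have "S \<subseteq> cube (G - {b}) (insert b E)"
    proof
      fix T assume "T \<in> S"
      then obtain B where "B \<subseteq> E" "T = G \<union> B" unfolding GE cube_def by auto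
      then have "T = (G - {b}) \<union> insert b B" "insert b B \<subseteq> insert b E" using that by auto
      then show "T \<in> cube (G - {b}) (insert b E)" unfolding cube_def by blast
    qed
    ultimately show False using no by blast
  qed
  show "\<exists>G E. S = cube G E \<and> G \<inter> E = {} \<and> finite E \<and> card E = k \<and> cube G E \<subseteq> V \<and>
      (\<forall>b. b \<notin> G \<union> E \<longrightarrow> \<not> cube G (insert b E) \<subseteq> V) \<and>
      (\<forall>b\<in>G. \<not> cube (G - {b}) (insert b E) \<subseteq> V)"
    using GE A B by (intro exI[of _ G] exI[of _ E]) simp
next
  assume "\<exists>G E. S = cube G E \<and> G \<inter> E = {} \<and> finite E \<and> card E = k \<and> cube G E \<subseteq> V \<and>
      (\<forall>b. b \<notin> G \<union> E \<longrightarrow> \<not> cube G (insert b E) \<subseteq> V) \<and>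
      (\<forall>b\<in>G. \<not> cube (G - {b}) (insert b E) \<subseteq> V)"
  then obtain G E where GE: "S = cube G E" "G \<inter> E = {}" "finite E" "card E = k" "cube G E \<subseteq> V"
    and A: "\<And>b. b \<notin> G \<union> E \<Longrightarrow> \<not> cube G (insert b E) \<subseteq> V"
    and B: "\<And>b. b \<in> G \<Longrightarrow> \<not> cube (G - {b}) (insert b E) \<subseteq> V"
    by metis
  have "\<not> (\<exists>S'. induced_cube V omega_adj (Suc k) S' \<and> S \<subseteq> S')"
  proof
    assume "\<exists>S'. induced_cube V omega_adj (Suc k) S' \<and> S \<subseteq> S'"
    then obtain G' E' where GE': "G' \<inter> E' = {}" "finite E'" "card E' = Suc k" "cube G' E' \<subseteq> V"
      and sub: "cube G E \<subseteq> cube G' E'"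
      unfolding induced_cube_iff GE by iprover
    have s: "G' \<subseteq> G" "E \<subseteq> E'" "G \<subseteq> G' \<union> E'" using cube_sub[OF GE(2) GE'(1) sub] by auto
    have "card (E' - E) = 1" using s GE'(2,3) GE(4) by (simp add: card_Diff_subset finite_subset)
    then obtain b where b: "E' - E = {b}" by (auto simp: card_1_singleton_iff)
    then have E': "E' = insert b E" "b \<notin> E" using s by auto
    show False
    proof (cases "b \<in> G")
      case True
      have "G' = G - {b}"
      proof (rule set_eqI)
        fix x show "x \<in> G' \<longleftrightarrow> x \<in> G - {b}" using s E' GE'(1) GE(2) True by auto
      qed
      then show False using B[OF True] GE'(4) E' by simp
    next
      case False
      have "G' = G"
      proof (rule set_eqI)
        fix x show "x \<in> G' \<longleftrightarrow> x \<in> G" using s E' GE'(1) GE(2) False by auto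
      qed
      then show False using A[of b] False E' GE'(4) by simp
    qed
  qed
  then show "maximal_cube V omega_adj k S"
    unfolding maximal_cube_def induced_cube_iff using GE by iprover
qed

lemma maximal_filters:
  assumes irr: "\<And>i. \<not> c i i" and fin: "finite U"
  shows "{S. maximal_cube {F. F \<subseteq> U \<and> closedc c F} omega_adj k S} =
         (\<lambda>G. cube G (AddS U c G)) ` {G. ValidS U c G \<and> card (AddS U c G) = k}"
    (is "?L = ?R")
proof
  define V where "V = {F. F \<subseteq> U \<and> closedc c F}"
  show "?L \<subseteq> ?R"
  proof
    fix S assume "S \<in> ?L"
    then have "maximal_cube V omega_adj k S" by (simp add: V_def)
    then obtain G E where GE: "S = cube G E" "G \<inter> E = {}" "finite E" "card E = k"
      and ok0: "cube G E \<subseteq> V"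
      and A0: "\<And>b. b \<notin> G \<union> E \<Longrightarrow> \<not> cube G (insert b E) \<subseteq> V"
      and B0: "\<And>b. b \<in> G \<Longrightarrow> \<not> cube (G - {b}) (insert b E) \<subseteq> V"
      unfolding maximal_iff by metis
    have ok: "cube G E \<subseteq> {F. F \<subseteq> U \<and> closedc c F}" using ok0 by (simp add: V_def)
    have A: "\<not> cube G (insert b E) \<subseteq> {F. F \<subseteq> U \<and> closedc c F}" if "b \<notin> G \<union> E" for b
      using A0[OF that] by (simp add: V_def)
    have B: "\<not> cube (G - {b}) (insert b E) \<subseteq> {F. F \<subseteq> U \<and> closedc c F}" if "b \<in> G" for b
      using B0[OF that] by (simp add: V_def)
    have ok': "G \<union> E \<subseteq> U" "closedc c G" "\<And>i j. i \<in> E \<Longrightarrow> c i j \<Longrightarrow> j \<in> G"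
      using ok unfolding cube_in_filters[OF irr GE(2)] by blast+
    have E: "E = AddS U c G"
    proof
      show "E \<subseteq> AddS U c G" using ok' GE(2) unfolding AddS_def by blast
      show "AddS U c G \<subseteq> E"
      proof
        fix b assume b: "b \<in> AddS U c G"
        show "b \<in> E"
        proof (rule ccontr)
          assume "b \<notin> E"
          moreover have "b \<notin> G" "b \<in> U" "\<And>j. c b j \<Longrightarrow> j \<in> G" using b unfolding AddS_def by auto
          ultimately have "cube G (insert b E) \<subseteq> {F. F \<subseteq> U \<and> closedc c F}"
            using ok' GE(2) by (subst cube_in_filters[OF irr]) auto
          then show False using A \<open>b \<notin> E\<close> \<open>b \<notin> G\<close> by blast
        qed
      qed
    qed
    have V: "ValidS U c G"
      unfolding ValidS_def
    proof (intro conjI ballI)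
      show "G \<subseteq> U" "closedc c G" using ok' by auto
      fix b assume b: "b \<in> G"
      show "\<exists>i\<in>G \<union> AddS U c G. c i b"
      proof (rule ccontr)
        assume nb: "\<not> (\<exists>i\<in>G \<union> AddS U c G. c i b)"
        then have nb': "\<forall>i\<in>G \<union> E. \<not> c i b" using E by simp
        have "(G - {b}) \<inter> insert b E = {}" using GE(2) by auto
        moreover have "(G - {b}) \<union> insert b E \<subseteq> U" using ok' b by auto
        moreover have "closedc c (G - {b})"
          using ok'(2) nb unfolding closedc_def by blast
        moreover have "\<forall>i\<in>insert b E. \<forall>j. c i j \<longrightarrow> j \<in> G - {b}"
          using ok'(2,3) nb' b irr unfolding closedc_def by blast
        ultimately have "cube (G - {b}) (insert b E) \<subseteq> {F. F \<subseteq> U \<and> closedc c F}"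
          by (subst cube_in_filters[OF irr]) auto
        then show False using B b by blast
      qed
    qed
    have "S = cube G (AddS U c G)" using GE(1) E by simp
    moreover have "G \<in> {G. ValidS U c G \<and> card (AddS U c G) = k}" using V GE(4) E by simp
    ultimately show "S \<in> ?R" by (rule image_eqI)
  qed
  show "?R \<subseteq> ?L"
  proof
    fix S assume "S \<in> ?R"
    then obtain G where S: "S = cube G (AddS U c G)" and V: "ValidS U c G" and k: "card (AddS U c G) = k"
      by blast
    define E where "E = AddS U c G"
    have dis: "G \<inter> E = {}" unfolding E_def AddS_def by auto
    have finE: "finite E" using fin unfolding E_def AddS_def by auto
    have VG: "G \<subseteq> U" "closedc c G" "\<And>b. b \<in> G \<Longrightarrow> \<exists>i\<in>G \<union> E. c i b"
      using V unfolding ValidS_def E_def by auto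
    have ok: "cube G E \<subseteq> {F. F \<subseteq> U \<and> closedc c F}"
    proof (subst cube_in_filters[OF irr dis])
      show "G \<union> E \<subseteq> U \<and> closedc c G \<and> (\<forall>i\<in>E. \<forall>j. c i j \<longrightarrow> j \<in> G)"
        using VG unfolding E_def AddS_def by auto
    qed
    have A: "\<not> cube G (insert b E) \<subseteq> {F. F \<subseteq> U \<and> closedc c F}" if "b \<notin> G \<union> E" for b
    proof
      assume H: "cube G (insert b E) \<subseteq> {F. F \<subseteq> U \<and> closedc c F}"
      have dis': "G \<inter> insert b E = {}" using that dis by auto
      have "b \<in> U" "\<forall>j. c b j \<longrightarrow> j \<in> G"
        using H[unfolded cube_in_filters[OF irr dis']] by auto
      then have "b \<in> E" using that unfolding E_def AddS_def by auto
      then show False using that by auto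
    qed
    have B: "\<not> cube (G - {b}) (insert b E) \<subseteq> {F. F \<subseteq> U \<and> closedc c F}" if b: "b \<in> G" for b
    proof
      assume H: "cube (G - {b}) (insert b E) \<subseteq> {F. F \<subseteq> U \<and> closedc c F}"
      have "(G - {b}) \<inter> insert b E = {}" using dis by auto
      from H[unfolded cube_in_filters[OF irr this]]
      have cl: "closedc c (G - {b})" and up: "\<forall>i\<in>insert b E. \<forall>j. c i j \<longrightarrow> j \<in> G - {b}" by auto
      obtain i where i: "i \<in> G \<union> E" "c i b" using VG(3)[OF b] by blast
      show False
      proof (cases "i \<in> E")
        case True then show False using up i by blast
      next
        case False
        then have "i \<in> G - {b}" using i irr by auto
        then show False using cl i unfolding closedc_def by blast
      qed
    qed
    have "maximal_cube {F. F \<subseteq> U \<and> closedc c F} omega_adj k S" unfolding maximal_iff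
      using S dis finE k ok A B unfolding E_def[symmetric] by (intro exI[of _ G] exI[of _ E]) simp
    then show "S \<in> ?L" by simp
  qed
qed

lemma cube_inj:
  "inj_on (\<lambda>G. cube G (AddS U c G)) X"
proof (rule inj_onI)
  fix G G' assume "cube G (AddS U c G) = cube G' (AddS U c G')"
  moreover have "G \<inter> AddS U c G = {}" "G' \<inter> AddS U c G' = {}" unfolding AddS_def by auto
  ultimately have "G' \<subseteq> G" "G \<subseteq> G'"
    using cube_sub[of G "AddS U c G" G' "AddS U c G'"] cube_sub[of G' "AddS U c G'" G "AddS U c G"]
    by auto
  then show "G = G'" by (rule subset_antisym[rotated])
qed

lemma card_maximal:
  assumes irr: "\<And>i. \<not> c i i" and fin: "finite U"
  shows "card {S. maximal_cube {F. F \<subseteq> U \<and> closedc c F} omega_adj k S} =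
         card {G. ValidS U c G \<and> card (AddS U c G) = k}"
  unfolding maximal_filters[OF assms] by (rule card_image[OF cube_inj])



lemma cover_iff: "xi_cover n i j \<longleftrightarrow> i \<le> n \<and> j \<le> n \<and>
   ((i = 2 \<and> j = 1) \<or> (odd i \<and> 3 \<le> i \<and> (j = i - 1 \<or> j = i + 1)))"
  unfolding xi_cover_def
  apply (rule iffI)
   apply (elim conjE disjE; simp; presburger)
  apply (elim conjE disjE; simp?)
  apply presburger
  done

lemma cover_irr: "\<not> xi_cover n i i" by (simp add: cover_iff; presburger)

lemma omega_verts_eq: "omega_verts n = {F. F \<subseteq> {1..n} \<and> closedc (xi_cover n) F}"
proof -
  have "xi_filter n F \<longleftrightarrow> F \<subseteq> {1..n} \<and> closedc (xi_cover n) F" for F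
  proof
    assume H: "xi_filter n F"
    show "F \<subseteq> {1..n} \<and> closedc (xi_cover n) F"
      unfolding closedc_def
    proof (intro conjI allI impI)
      show "F \<subseteq> {1..n}" using H unfolding xi_filter_def by simp
      fix i j assume c: "xi_cover n i j" and i: "i \<in> F"
      have "j \<in> {1..n}" using c by (auto simp: cover_iff)
      moreover have "xi_le n i j" unfolding xi_le_def using c by simp
      ultimately show "j \<in> F" using H i unfolding xi_filter_def by blast
    qed
  next
    assume H: "F \<subseteq> {1..n} \<and> closedc (xi_cover n) F"
    have "b \<in> F" if "xi_le n a b" "a \<in> F" for a b
      using that(1)[unfolded xi_le_def] that(2)
    proof (induction rule: rtranclp_induct)
      case base then show ?case by simp
    next
      case (step y z) then show ?case using H unfolding closedc_def by blast
    qed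
    then show "xi_filter n F" using H unfolding xi_filter_def by blast
  qed
  then show ?thesis unfolding omega_verts_def by blast
qed

definition AA :: "nat \<Rightarrow> nat set \<Rightarrow> nat set" where
  "AA n G = {b. 1 \<le> b \<and> b \<le> n \<and> b \<notin> G \<and> (b = 2 \<longrightarrow> 1 \<in> G) \<and>
      (odd b \<and> 3 \<le> b \<longrightarrow> b - 1 \<in> G \<and> (b + 1 \<le> n \<longrightarrow> b + 1 \<in> G))}"

lemma AddS_eq: "AddS {1..n} (xi_cover n) G = AA n G"
  unfolding AddS_def AA_def cover_iff
  apply (rule set_eqI)
  apply (simp only: mem_Collect_eq Diff_iff atLeastAtMost_iff)
  apply (rule iffI)
   apply (elim conjE)
   apply (intro conjI impI; simp)
  apply (elim conjE)
  apply (intro conjI allI impI; simp)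
  apply (elim conjE disjE; simp)
  done

definition VV :: "nat \<Rightarrow> nat set \<Rightarrow> bool" where
  "VV n G \<longleftrightarrow> G \<subseteq> {1..n} \<and> (\<forall>b\<in>G. b = 1 \<or> b = 2 \<or> (even b \<and> 4 \<le> b)) \<and>
     (2 \<in> G \<longrightarrow> 1 \<in> G) \<and> (1 \<in> G \<longrightarrow> 2 \<le> n) \<and> (2 \<in> G \<longrightarrow> 3 \<in> AA n G) \<and>
     (\<forall>b\<in>G. even b \<and> 4 \<le> b \<longrightarrow> b - 1 \<in> AA n G \<or> b + 1 \<in> AA n G)"

lemma lower_cover: "xi_cover n i b \<Longrightarrow> b \<in> G \<Longrightarrow> (\<forall>b\<in>G. \<not> (odd b \<and> 3 \<le> b)) \<Longrightarrow>
   (b = 1 \<and> i = 2) \<or> (even b \<and> 2 \<le> b \<and> (i = b + 1 \<or> (4 \<le> b \<and> i = b - 1)))"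
  unfolding cover_iff by (elim conjE disjE; simp; presburger)

lemma ValidS_eq: "ValidS {1..n} (xi_cover n) G \<longleftrightarrow> VV n G"
proof
  assume H: "ValidS {1..n} (xi_cover n) G"
  have sub: "G \<subseteq> {1..n}" and cl: "closedc (xi_cover n) G"
    and low: "\<And>b. b \<in> G \<Longrightarrow> \<exists>i\<in>G \<union> AA n G. xi_cover n i b"
    using H unfolding ValidS_def AddS_eq by auto
  have noodd: "\<not> (odd b \<and> 3 \<le> b)" if bG: "b \<in> G" for b
  proof
    assume ob: "odd b \<and> 3 \<le> b"
    obtain i where "xi_cover n i b" using low[OF bG] by blast
    then show False using ob unfolding cover_iff by (elim conjE disjE; simp; presburger)
  qed
  have shape: "b = 1 \<or> b = 2 \<or> (even b \<and> 4 \<le> b)" if "b \<in> G" for b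
  proof -
    have "1 \<le> b" using sub that by auto
    then show ?thesis using noodd[OF that] by presburger
  qed
  have c21: "2 \<in> G \<longrightarrow> 1 \<in> G"
  proof
    assume "2 \<in> G"
    moreover then have "xi_cover n 2 1" using sub by (auto simp: cover_iff)
    ultimately show "1 \<in> G" using cl unfolding closedc_def by blast
  qed
  have c1: "1 \<in> G \<longrightarrow> 2 \<le> n"
  proof
    assume "1 \<in> G"
    then obtain i where "xi_cover n i 1" using low by blast
    then show "2 \<le> n" unfolding cover_iff by auto
  qed
  have c2: "2 \<in> G \<longrightarrow> 3 \<in> AA n G"
  proof
    assume "2 \<in> G"
    then obtain i where i: "i \<in> G \<union> AA n G" "xi_cover n i 2" using low by blast
    then have "i = 3" unfolding cover_iff by (elim conjE disjE; simp; presburger)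
    moreover have "3 \<notin> G" using noodd by force
    ultimately show "3 \<in> AA n G" using i by auto
  qed
  have ce: "b - 1 \<in> AA n G \<or> b + 1 \<in> AA n G" if bb: "b \<in> G" "even b" "4 \<le> b" for b
  proof -
    obtain i where i: "i \<in> G \<union> AA n G" "xi_cover n i b" using low bb(1) by blast
    then have "odd i" "3 \<le> i" "i = b - 1 \<or> i = b + 1" using bb unfolding cover_iff
      by (elim conjE disjE; simp; presburger)+
    moreover have "i \<notin> G" using noodd \<open>odd i\<close> \<open>3 \<le> i\<close> by blast
    ultimately show ?thesis using i by auto
  qed
  show "VV n G" unfolding VV_def using sub shape c21 c1 c2 ce by blast
next
  assume H: "VV n G"
  have sub: "G \<subseteq> {1..n}" and shape: "\<And>b. b \<in> G \<Longrightarrow> b = 1 \<or> b = 2 \<or> (even b \<and> 4 \<le> b)"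
    and c21: "2 \<in> G \<longrightarrow> 1 \<in> G" and c1: "1 \<in> G \<longrightarrow> 2 \<le> n" and c2: "2 \<in> G \<longrightarrow> 3 \<in> AA n G"
    and ce: "\<And>b. b \<in> G \<Longrightarrow> even b \<Longrightarrow> 4 \<le> b \<Longrightarrow> b - 1 \<in> AA n G \<or> b + 1 \<in> AA n G"
    using H unfolding VV_def by blast+
  have cl: "closedc (xi_cover n) G" unfolding closedc_def
  proof (intro allI impI)
    fix i j assume c: "xi_cover n i j" and i: "i \<in> G"
    then have "i = 2 \<and> j = 1" using shape[OF i] unfolding cover_iff by auto
    then show "j \<in> G" using c21 i by auto
  qed
  have low: "\<exists>i\<in>G \<union> AA n G. xi_cover n i b" if b: "b \<in> G" for b
  proof -
    have bn: "b \<le> n" using sub b by auto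
    consider "b = 1" | "b = 2" | "even b" "4 \<le> b" using shape[OF b] by blast
    then show ?thesis
    proof cases
      case 1
      then have n2: "2 \<le> n" using c1 b by auto
      have "2 \<in> G \<union> AA n G" using b 1 n2 by (auto simp: AA_def)
      moreover have "xi_cover n 2 1" using n2 by (simp add: cover_iff)
      ultimately show ?thesis using 1 by blast
    next
      case 2
      then have "3 \<in> AA n G" using c2 b by auto
      moreover then have "xi_cover n 3 2" by (simp add: cover_iff AA_def)
      ultimately show ?thesis using 2 by blast
    next
      case 3
      from ce[OF b 3] show ?thesis
      proof
        assume a: "b - 1 \<in> AA n G"
        have "xi_cover n (b - 1) b" using 3 bn unfolding cover_iff by presburger
        then show ?thesis using a by blast
      next
        assume a: "b + 1 \<in> AA n G"
        then have "b + 1 \<le> n" by (simp add: AA_def)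
        then have "xi_cover n (b + 1) b" using 3 bn unfolding cover_iff by presburger
        then show ?thesis using a by blast
      qed
    qed
  qed
  show "ValidS {1..n} (xi_cover n) G" unfolding ValidS_def AddS_eq using sub cl low by blast
qed



lemma mem_AA: "b \<in> AA n G \<longleftrightarrow> 1 \<le> b \<and> b \<le> n \<and> b \<notin> G \<and> (b = 2 \<longrightarrow> 1 \<in> G) \<and>
      (odd b \<and> 3 \<le> b \<longrightarrow> b - 1 \<in> G \<and> (b + 1 \<le> n \<longrightarrow> b + 1 \<in> G))"
  unfolding AA_def by simp

definition VW :: "nat \<Rightarrow> nat set \<Rightarrow> bool" where
  "VW n G \<longleftrightarrow> G \<subseteq> {1..n} \<and> (\<forall>b\<in>G. b = 1 \<or> b = 2 \<or> (even b \<and> 4 \<le> b)) \<and>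
     (2 \<in> G \<longrightarrow> 1 \<in> G) \<and> (1 \<in> G \<longrightarrow> 2 \<le> n) \<and> (2 \<in> G \<longrightarrow> 3 \<le> n \<and> (4 \<le> n \<longrightarrow> 4 \<in> G)) \<and>
     (\<forall>b\<in>G. even b \<and> 4 \<le> b \<longrightarrow> b - 2 \<in> G \<or> (b + 1 \<le> n \<and> (b + 2 \<le> n \<longrightarrow> b + 2 \<in> G)))"

lemma VV_VW: "VV n G \<longleftrightarrow> VW n G"
proof
  assume H: "VV n G"
  have sub: "G \<subseteq> {1..n}" and shape: "\<And>b. b \<in> G \<Longrightarrow> b = 1 \<or> b = 2 \<or> (even b \<and> 4 \<le> b)"
    and c21: "2 \<in> G \<longrightarrow> 1 \<in> G" and c1: "1 \<in> G \<longrightarrow> 2 \<le> n" and c2: "2 \<in> G \<longrightarrow> 3 \<in> AA n G"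
    and ce: "\<And>b. b \<in> G \<Longrightarrow> even b \<Longrightarrow> 4 \<le> b \<Longrightarrow> b - 1 \<in> AA n G \<or> b + 1 \<in> AA n G"
    using H unfolding VV_def by blast+
  have c2': "2 \<in> G \<longrightarrow> 3 \<le> n \<and> (4 \<le> n \<longrightarrow> 4 \<in> G)" using c2 by (simp add: mem_AA)
  have ce': "b - 2 \<in> G \<or> (b + 1 \<le> n \<and> (b + 2 \<le> n \<longrightarrow> b + 2 \<in> G))"
    if b: "b \<in> G" "even b" "4 \<le> b" for b
  proof -
    have o1: "odd (b - 1)" "3 \<le> b - 1" "b - 1 - 1 = b - 2" "b - 1 + 1 = b" using b by presburger+
    have o2: "odd (b + 1)" "3 \<le> b + 1" "b + 1 - 1 = b" "b + 1 + 1 = b + 2" using b by presburger+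
    from ce[OF b] show ?thesis
    proof
      assume "b - 1 \<in> AA n G" then show ?thesis unfolding mem_AA using o1 by simp
    next
      assume "b + 1 \<in> AA n G" then show ?thesis unfolding mem_AA using o2 by simp
    qed
  qed
  show "VW n G" unfolding VW_def using sub shape c21 c1 c2' ce' by blast
next
  assume H: "VW n G"
  have sub: "G \<subseteq> {1..n}" and shape: "\<And>b. b \<in> G \<Longrightarrow> b = 1 \<or> b = 2 \<or> (even b \<and> 4 \<le> b)"
    and c21: "2 \<in> G \<longrightarrow> 1 \<in> G" and c1: "1 \<in> G \<longrightarrow> 2 \<le> n"
    and c2: "2 \<in> G \<longrightarrow> 3 \<le> n \<and> (4 \<le> n \<longrightarrow> 4 \<in> G)"
    and ce: "\<And>b. b \<in> G \<Longrightarrow> even b \<Longrightarrow> 4 \<le> b \<Longrightarrow> b - 2 \<in> G \<or> (b + 1 \<le> n \<and> (b + 2 \<le> n \<longrightarrow> b + 2 \<in> G))"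
    using H unfolding VW_def by blast+
  have noodd: "x \<notin> G" if "odd x" "3 \<le> x" for x using shape that by fastforce
  have c2': "2 \<in> G \<longrightarrow> 3 \<in> AA n G" using c2 noodd[of 3] by (auto simp: mem_AA)
  have ce': "b - 1 \<in> AA n G \<or> b + 1 \<in> AA n G" if b: "b \<in> G" "even b" "4 \<le> b" for b
  proof -
    have o1: "odd (b - 1)" "3 \<le> b - 1" "b - 1 - 1 = b - 2" "b - 1 + 1 = b" "b - 1 \<noteq> 2" "1 \<le> b - 1"
      using b by presburger+
    have o2: "odd (b + 1)" "3 \<le> b + 1" "b + 1 - 1 = b" "b + 1 + 1 = b + 2" "b + 1 \<noteq> 2" "1 \<le> b + 1"
      using b by presburger+
    have bn: "b \<le> n" using sub b by auto
    from ce[OF b] show ?thesis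
    proof
      assume "b - 2 \<in> G" then have "b - 1 \<in> AA n G"
        unfolding mem_AA using o1 bn b noodd[OF o1(1,2)] by simp
      then show ?thesis ..
    next
      assume "b + 1 \<le> n \<and> (b + 2 \<le> n \<longrightarrow> b + 2 \<in> G)" then have "b + 1 \<in> AA n G"
        unfolding mem_AA using o2 bn b noodd[OF o2(1,2)] by simp
      then show ?thesis ..
    qed
  qed
  show "VV n G" unfolding VV_def using sub shape c21 c1 c2' ce' by blast
qed

lemma VW_D: assumes "VW n G"
  shows "G \<subseteq> {1..n}" "\<And>b. b \<in> G \<Longrightarrow> b = 1 \<or> b = 2 \<or> (even b \<and> 4 \<le> b)"
    "2 \<in> G \<Longrightarrow> 1 \<in> G" "1 \<in> G \<Longrightarrow> 2 \<le> n" "2 \<in> G \<Longrightarrow> 3 \<le> n" "2 \<in> G \<Longrightarrow> 4 \<le> n \<Longrightarrow> 4 \<in> G"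
    "\<And>b. b \<in> G \<Longrightarrow> even b \<Longrightarrow> 4 \<le> b \<Longrightarrow> b - 2 \<in> G \<or> (b + 1 \<le> n \<and> (b + 2 \<le> n \<longrightarrow> b + 2 \<in> G))"
  using assms unfolding VW_def by blast+

lemma VW_I:
  assumes "G \<subseteq> {1..n}" "\<And>b. b \<in> G \<Longrightarrow> b = 1 \<or> b = 2 \<or> (even b \<and> 4 \<le> b)"
    "2 \<in> G \<Longrightarrow> 1 \<in> G" "1 \<in> G \<Longrightarrow> 2 \<le> n" "2 \<in> G \<Longrightarrow> 3 \<le> n" "2 \<in> G \<Longrightarrow> 4 \<le> n \<Longrightarrow> 4 \<in> G"
    "\<And>b. b \<in> G \<Longrightarrow> even b \<Longrightarrow> 4 \<le> b \<Longrightarrow> b - 2 \<in> G \<or> (b + 1 \<le> n \<and> (b + 2 \<le> n \<longrightarrow> b + 2 \<in> G))"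
  shows "VW n G"
  using assms unfolding VW_def by blast

lemma A1: assumes m: "even m" "4 \<le> m" and V: "VW m G" shows "VW (m + 2) G"
proof (rule VW_I)
  note D = VW_D[OF V]
  show "G \<subseteq> {1..m + 2}" using D(1) by auto
  fix b assume b: "b \<in> G" "even b" "4 \<le> b"
  have bm: "b \<le> m" using D(1) b by auto
  from D(7)[OF b] show "b - 2 \<in> G \<or> (b + 1 \<le> m + 2 \<and> (b + 2 \<le> m + 2 \<longrightarrow> b + 2 \<in> G))"
  proof
    assume "b + 1 \<le> m \<and> (b + 2 \<le> m \<longrightarrow> b + 2 \<in> G)"
    moreover have "b + 2 \<le> m" if "b + 1 \<le> m" using that m b by presburger
    ultimately show ?thesis by auto
  qed simp
qed (use VW_D[OF V] m in auto)

lemma A2: assumes m: "even m" "4 \<le> m" and V: "VW (m + 2) G" and nG: "m + 2 \<notin> G" shows "VW m G"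
proof -
  note D = VW_D[OF V]
  have sub: "G \<subseteq> {1..m}"
  proof
    fix b assume b: "b \<in> G"
    have "b \<le> m + 2" "1 \<le> b" using D(1) b by auto
    moreover have "b \<noteq> m + 2" using nG b by auto
    moreover have "b \<noteq> m + 1" using D(2)[OF b] m by presburger
    ultimately show "b \<in> {1..m}" by auto
  qed
  show ?thesis
  proof (rule VW_I)
    show "G \<subseteq> {1..m}" by (rule sub)
    fix b assume b: "b \<in> G" "even b" "4 \<le> b"
    have bm: "b \<le> m" using sub b by auto
    from D(7)[OF b] show "b - 2 \<in> G \<or> (b + 1 \<le> m \<and> (b + 2 \<le> m \<longrightarrow> b + 2 \<in> G))"
    proof
      assume "b + 1 \<le> m + 2 \<and> (b + 2 \<le> m + 2 \<longrightarrow> b + 2 \<in> G)"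
      then have "b + 2 \<in> G" using bm by auto
      then have "b + 2 \<le> m" using sub by auto
      then show ?thesis using \<open>b + 2 \<in> G\<close> by auto
    qed simp
  qed (use D m in auto)
qed

lemma A3: assumes m: "even m" "4 \<le> m" and V: "VW m G"
  shows "AA (m + 2) G = insert (m + 2) (AA m G)"
proof (rule set_eqI)
  fix x
  note D = VW_D[OF V]
  have "m + 1 \<notin> G" "m + 2 \<notin> G" using D(1) by auto
  consider "x = m + 2" | "x = m + 1" | "x = m" | "x + 1 \<le> m" | "m + 2 < x" by linarith
  then show "x \<in> AA (m + 2) G \<longleftrightarrow> x \<in> insert (m + 2) (AA m G)"
  proof cases
    case 1 then show ?thesis using m \<open>m + 2 \<notin> G\<close> by (simp add: mem_AA)
  next
    case 2 then show ?thesis using m \<open>m + 2 \<notin> G\<close> by (simp add: mem_AA)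
  next
    case 3 then show ?thesis using m by (simp add: mem_AA)
  next
    case 4 then show ?thesis by (auto simp: mem_AA)
  qed (auto simp: mem_AA)
qed

lemma B1: assumes m: "odd m" "3 \<le> m" and V: "VW m G" shows "VW (m + 3) (G \<union> {m + 1, m + 3})"
proof -
  note D = VW_D[OF V]
  have par: "even (m + 1)" "even (m + 3)" "4 \<le> m + 1" using m by presburger+
  show ?thesis
  proof (rule VW_I)
    show "G \<union> {m + 1, m + 3} \<subseteq> {1..m + 3}" using D(1) by auto
    fix b assume b: "b \<in> G \<union> {m + 1, m + 3}" "even b" "4 \<le> b"
    show "b - 2 \<in> G \<union> {m + 1, m + 3} \<or> (b + 1 \<le> m + 3 \<and> (b + 2 \<le> m + 3 \<longrightarrow> b + 2 \<in> G \<union> {m + 1, m + 3}))"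
    proof (cases "b \<in> G")
      case True
      have "b \<le> m" using D(1) True b(2) m by auto
      then have bm: "b + 1 \<le> m" using b(2) m by presburger
      from D(7)[OF True b(2,3)] show ?thesis
      proof
        assume "b + 1 \<le> m \<and> (b + 2 \<le> m \<longrightarrow> b + 2 \<in> G)"
        moreover have "b + 2 \<le> m \<or> b + 2 = m + 1" using bm by auto
        ultimately show ?thesis by auto
      qed simp
    next
      case False
      then have "b = m + 1 \<or> b = m + 3" using b by auto
      then show ?thesis by auto
    qed
  next
    fix b assume "b \<in> G \<union> {m + 1, m + 3}"
    then show "b = 1 \<or> b = 2 \<or> (even b \<and> 4 \<le> b)" using D(2) par by auto
  next
    assume "2 \<in> G \<union> {m + 1, m + 3}" "4 \<le> m + 3"
    then have "2 \<in> G" using m by auto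
    then show "4 \<in> G \<union> {m + 1, m + 3}" using D(6) m by (cases "m = 3") auto
  qed (use D m in auto)
qed

lemma B2: assumes m: "odd m" "3 \<le> m" and V: "VW (m + 3) G" and nG: "m + 3 \<in> G"
  shows "m + 1 \<in> G" "VW m (G - {m + 1, m + 3})"
proof -
  note D = VW_D[OF V]
  have par: "even (m + 1)" "even (m + 3)" "4 \<le> m + 3" "odd (m + 2)" using m by presburger+
  show m1: "m + 1 \<in> G" using D(7)[OF nG par(2,3)] by simp
  have sub: "G - {m + 1, m + 3} \<subseteq> {1..m}"
  proof
    fix b assume b: "b \<in> G - {m + 1, m + 3}"
    have "b \<le> m + 3" "1 \<le> b" using D(1) b by auto
    moreover have "b \<noteq> m + 2" using D(2)[of b] b par m by auto
    ultimately show "b \<in> {1..m}" using b by auto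
  qed
  show "VW m (G - {m + 1, m + 3})"
  proof (rule VW_I)
    show "G - {m + 1, m + 3} \<subseteq> {1..m}" by (rule sub)
    fix b assume b: "b \<in> G - {m + 1, m + 3}" "even b" "4 \<le> b"
    have "b \<le> m" using sub b m by auto
      then have bm: "b + 1 \<le> m" using b(2) m by presburger
    from D(7)[of b] b show "b - 2 \<in> G - {m + 1, m + 3} \<or> (b + 1 \<le> m \<and> (b + 2 \<le> m \<longrightarrow> b + 2 \<in> G - {m + 1, m + 3}))"
      using bm by auto
  next
    assume "2 \<in> G - {m + 1, m + 3}" "4 \<le> m"
    then show "4 \<in> G - {m + 1, m + 3}" using D(6) by auto
  qed (use D m in auto)
qed

lemma B3: assumes m: "odd m" "3 \<le> m" and V: "VW m G"
  shows "AA (m + 3) (G \<union> {m + 1, m + 3}) = insert (m + 2) (AA m G)"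
proof (rule set_eqI)
  fix x
  note D = VW_D[OF V]
  have nG: "m + 1 \<notin> G" "m + 2 \<notin> G" "m + 3 \<notin> G" "m \<notin> G" using D(1) D(2)[of m] m by auto
  have par: "odd (m + 2)" "m + 2 \<noteq> 2" "m + 2 - 1 = m + 1" "m + 2 + 1 = m + 3" "m - 1 + 1 = m" using m by presburger+
  consider "x = m + 3" | "x = m + 2" | "x = m + 1" | "x = m" | "x + 1 \<le> m" | "m + 3 < x" by linarith
  then show "x \<in> AA (m + 3) (G \<union> {m + 1, m + 3}) \<longleftrightarrow> x \<in> insert (m + 2) (AA m G)"
  proof cases
    case 2 then show ?thesis using par nG by (simp add: mem_AA)
  next
    case 4 then show ?thesis using par nG m by (auto simp: mem_AA)
  next
    case 5 then show ?thesis using m by (auto simp: mem_AA)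
  qed (auto simp: mem_AA)
qed

lemma C1: assumes m: "even m" "2 \<le> m" and V: "VW m G" shows "VW (m + 3) G" "m + 2 \<notin> G"
proof -
  note D = VW_D[OF V]
  show "m + 2 \<notin> G" using D(1) by auto
  show "VW (m + 3) G"
  proof (rule VW_I)
    show "G \<subseteq> {1..m + 3}" using D(1) by auto
    fix b assume b: "b \<in> G" "even b" "4 \<le> b"
    from D(7)[OF b] show "b - 2 \<in> G \<or> (b + 1 \<le> m + 3 \<and> (b + 2 \<le> m + 3 \<longrightarrow> b + 2 \<in> G))"
    proof
      assume a: "b + 1 \<le> m \<and> (b + 2 \<le> m \<longrightarrow> b + 2 \<in> G)"
      then have "b + 1 \<le> m" by simp
      then have "b + 2 \<le> m" using m b(2) by presburger
      then show ?thesis using a by auto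
    qed simp
  next
    assume "2 \<in> G" "4 \<le> m + 3"
    then have "3 \<le> m" using D(5) by auto
    then have "4 \<le> m" using m by presburger
    then show "4 \<in> G" using D(6) \<open>2 \<in> G\<close> by auto
  qed (use D m in auto)
qed

lemma C2: assumes m: "even m" "2 \<le> m" and V: "VW (m + 3) G" and nG: "m + 2 \<notin> G" shows "VW m G"
proof -
  note D = VW_D[OF V]
  have sub: "G \<subseteq> {1..m}"
  proof
    fix b assume b: "b \<in> G"
    have "b \<le> m + 3" "1 \<le> b" using D(1) b by auto
    moreover have "b \<noteq> m + 2" using nG b by auto
    moreover have "b \<noteq> m + 1" "b \<noteq> m + 3" using D(2)[OF b] m by presburger+
    ultimately show "b \<in> {1..m}" by auto
  qed
  show ?thesis
  proof (rule VW_I)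
    show "G \<subseteq> {1..m}" by (rule sub)
    fix b assume b: "b \<in> G" "even b" "4 \<le> b"
    have bm: "b \<le> m" using sub b by auto
    from D(7)[OF b] show "b - 2 \<in> G \<or> (b + 1 \<le> m \<and> (b + 2 \<le> m \<longrightarrow> b + 2 \<in> G))"
    proof
      assume "b + 1 \<le> m + 3 \<and> (b + 2 \<le> m + 3 \<longrightarrow> b + 2 \<in> G)"
      then have "b + 2 \<in> G" using bm by auto
      then have "b + 2 \<le> m" using sub by auto
      then show ?thesis using \<open>b + 2 \<in> G\<close> by auto
    qed simp
  next
    assume "2 \<in> G"
    moreover have "4 \<le> m + 3" using m by simp
    ultimately have "4 \<in> G" using D(6) by blast
    then show "3 \<le> m" using sub by auto
  next
    assume "2 \<in> G" "4 \<le> m"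
    then show "4 \<in> G" using D(6) by auto
  qed (use D m in auto)
qed

lemma C3: assumes m: "even m" "2 \<le> m" and V: "VW m G"
  shows "AA (m + 3) G = insert (m + 2) (AA m G)"
proof (rule set_eqI)
  fix x
  note D = VW_D[OF V]
  have nG: "m + 1 \<notin> G" "m + 2 \<notin> G" "m + 3 \<notin> G" using D(1) by auto
  have par: "odd (m + 3)" "odd (m + 1)" "even (m + 2)" "m + 3 - 1 = m + 2" "m + 1 + 1 = m + 2" using m by presburger+
  consider "x = m + 3" | "x = m + 2" | "x = m + 1" | "x = m" | "x + 1 \<le> m" | "m + 3 < x" by linarith
  then show "x \<in> AA (m + 3) G \<longleftrightarrow> x \<in> insert (m + 2) (AA m G)"
  proof cases
    case 1 then show ?thesis using par nG by (simp add: mem_AA)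
  next
    case 2 then show ?thesis using par nG m by (simp add: mem_AA)
  next
    case 3 then show ?thesis using par nG m by (simp add: mem_AA)
  next
    case 4 then show ?thesis using par nG m by (auto simp: mem_AA)
  next
    case 5 then show ?thesis using m by (auto simp: mem_AA)
  qed (auto simp: mem_AA)
qed

lemma D1: assumes m: "odd m" "3 \<le> m" and V: "VW m G" shows "VW (m + 2) (insert (m + 1) G)"
proof -
  note D = VW_D[OF V]
  have par: "even (m + 1)" "4 \<le> m + 1" using m by presburger+
  show ?thesis
  proof (rule VW_I)
    show "insert (m + 1) G \<subseteq> {1..m + 2}" using D(1) by auto
    fix b assume b: "b \<in> insert (m + 1) G" "even b" "4 \<le> b"
    show "b - 2 \<in> insert (m + 1) G \<or> (b + 1 \<le> m + 2 \<and> (b + 2 \<le> m + 2 \<longrightarrow> b + 2 \<in> insert (m + 1) G))"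
    proof (cases "b \<in> G")
      case True
      have "b \<le> m" using D(1) True b(2) m by auto
      then have bm: "b + 1 \<le> m" using b(2) m by presburger
      from D(7)[OF True b(2,3)] show ?thesis
      proof
        assume "b + 1 \<le> m \<and> (b + 2 \<le> m \<longrightarrow> b + 2 \<in> G)"
        moreover have "b + 2 \<le> m \<or> b + 2 = m + 1" using bm by auto
        ultimately show ?thesis by auto
      qed simp
    next
      case False
      then have "b = m + 1" using b by auto
      then show ?thesis by auto
    qed
  next
    fix b assume "b \<in> insert (m + 1) G"
    then show "b = 1 \<or> b = 2 \<or> (even b \<and> 4 \<le> b)" using D(2) par by auto
  next
    assume "2 \<in> insert (m + 1) G" "4 \<le> m + 2"
    then have "2 \<in> G" using m by auto
    then show "4 \<in> insert (m + 1) G" using D(6) m by (cases "m = 3") auto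
  qed (use D m in auto)
qed

lemma D2: assumes m: "odd m" "3 \<le> m" and V: "VW (m + 2) G" and mG: "m + 1 \<in> G"
  shows "VW m (G - {m + 1})"
proof -
  note D = VW_D[OF V]
  have par: "odd (m + 2)" using m by presburger
  have sub: "G - {m + 1} \<subseteq> {1..m}"
  proof
    fix b assume b: "b \<in> G - {m + 1}"
    have "b \<le> m + 2" "1 \<le> b" using D(1) b by auto
    moreover have "b \<noteq> m + 2" using D(2)[of b] b par m by auto
    ultimately show "b \<in> {1..m}" using b by auto
  qed
  show ?thesis
  proof (rule VW_I)
    show "G - {m + 1} \<subseteq> {1..m}" by (rule sub)
    fix b assume b: "b \<in> G - {m + 1}" "even b" "4 \<le> b"
    have "b \<le> m" using sub b m by auto
      then have bm: "b + 1 \<le> m" using b(2) m by presburger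
    from D(7)[of b] b show "b - 2 \<in> G - {m + 1} \<or> (b + 1 \<le> m \<and> (b + 2 \<le> m \<longrightarrow> b + 2 \<in> G - {m + 1}))"
      using bm by auto
  next
    assume "2 \<in> G - {m + 1}" "4 \<le> m"
    then show "4 \<in> G - {m + 1}" using D(6) by auto
  qed (use D m in auto)
qed

lemma D3: assumes m: "odd m" "3 \<le> m" and V: "VW m G"
  shows "AA (m + 2) (insert (m + 1) G) = insert (m + 2) (AA m G)"
proof (rule set_eqI)
  fix x
  note D = VW_D[OF V]
  have nG: "m + 1 \<notin> G" "m + 2 \<notin> G" "m \<notin> G" using D(1) D(2)[of m] m by auto
  have par: "odd (m + 2)" "m + 2 \<noteq> 2" "m + 2 - 1 = m + 1" "m - 1 + 1 = m" using m by presburger+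
  consider "x = m + 2" | "x = m + 1" | "x = m" | "x + 1 \<le> m" | "m + 2 < x" by linarith
  then show "x \<in> AA (m + 2) (insert (m + 1) G) \<longleftrightarrow> x \<in> insert (m + 2) (AA m G)"
  proof cases
    case 1 then show ?thesis using par nG by (simp add: mem_AA)
  next
    case 3 then show ?thesis using par nG m by (auto simp: mem_AA)
  next
    case 4 then show ?thesis using m by (auto simp: mem_AA)
  qed (auto simp: mem_AA)
qed


unbundle fps_syntax

lemma coeff_D:
  fixes a :: "nat \<Rightarrow> real"
  shows "(Abs_fps a * (1 - fps_const x * fps_X ^ 2 * (1 + fps_X))) $ n =
     a n - (if 2 \<le> n then x * a (n - 2) else 0) - (if 3 \<le> n then x * a (n - 3) else 0)"
proof -
  have e: "Abs_fps a * (1 - fps_const x * fps_X ^ 2 * (1 + fps_X)) =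
      Abs_fps a - fps_const x * (fps_X ^ 2 * Abs_fps a) - fps_const x * (fps_X ^ 3 * Abs_fps a)"
    by (simp add: algebra_simps power_Suc numeral_3_eq_3 numeral_2_eq_2)
  show ?thesis unfolding e by (simp add: fps_X_power_mult_nth)
qed

lemma coeff_D2:
  fixes a :: "nat \<Rightarrow> real"
  shows "(Abs_fps a * (1 - fps_X ^ 2 - fps_X ^ 3)) $ n =
     a n - (if 2 \<le> n then a (n - 2) else 0) - (if 3 \<le> n then a (n - 3) else 0)"
proof -
  have e: "Abs_fps a * (1 - fps_X ^ 2 - fps_X ^ 3) =
      Abs_fps a - (fps_X ^ 2 * Abs_fps a) - (fps_X ^ 3 * Abs_fps a)"
    by (simp add: algebra_simps)
  show ?thesis unfolding e by (simp add: fps_X_power_mult_nth)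
qed

lemma fps_main:
  fixes W :: "nat \<Rightarrow> real"
  assumes w0: "W 0 = 1" and w1: "W 1 = x" and w2: "W 2 = 2 * x" and w3: "W 3 = 3 * x"
    and w4: "W 4 = 2 * x ^ 2 + x"
    and rec: "\<And>n. 5 \<le> n \<Longrightarrow> W n = x * W (n - 2) + x * W (n - 3)"
  shows "Abs_fps W = (2 + fps_X) / (1 - fps_const x * fps_X ^ 2 * (1 + fps_X))
              - fps_const (1 - x) * fps_X - 1"
proof -
  define D :: "real fps" where "D = 1 - fps_const x * fps_X ^ 2 * (1 + fps_X)"
  define Q :: "real fps" where "Q = fps_const (1 - x) * fps_X + 1"
  have D0: "D $ 0 \<noteq> 0" unfolding D_def by simp
  have Qa: "Q = Abs_fps (\<lambda>n. if n = 0 then 1 else if n = 1 then 1 - x else 0)"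
    unfolding Q_def by (rule fps_ext) (simp add: fps_X_def)
  have P: "2 + fps_X = Abs_fps (\<lambda>n. if n = 0 then 2 else if n = 1 then 1 else 0 :: real)"
    by (rule fps_ext) (simp add: fps_X_def numeral_fps_const)
  have key: "Abs_fps W * D = (2 + fps_X) - Q * D"
  proof (rule fps_ext)
    fix n
    have a1: "(Q * D) $ n = (if n = 0 then 1 else if n = 1 then 1 - x else 0)
        - (if 2 \<le> n then x * (if n - 2 = 0 then 1 else if n - 2 = 1 then 1 - x else 0) else 0)
        - (if 3 \<le> n then x * (if n - 3 = 0 then 1 else if n - 3 = 1 then 1 - x else 0) else 0)"
      unfolding D_def Qa by (rule coeff_D)
    have a2: "(Abs_fps W * D) $ n = W n - (if 2 \<le> n then x * W (n - 2) else 0)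
        - (if 3 \<le> n then x * W (n - 3) else 0)"
      unfolding D_def by (rule coeff_D)
    have a3: "(2 + fps_X :: real fps) $ n = (if n = 0 then 2 else if n = 1 then 1 else 0)"
      unfolding P by simp
    have s: "(2 + fps_X - Q * D) $ n = (2 + fps_X :: real fps) $ n - (Q * D) $ n" by (rule fps_sub_nth)
    have arith: "W n - (if 2 \<le> n then x * W (n - 2) else 0) - (if 3 \<le> n then x * W (n - 3) else 0) =
      (if n = 0 then 2 else if n = 1 then 1 else 0) -
      ((if n = 0 then 1 else if n = 1 then 1 - x else 0)
        - (if 2 \<le> n then x * (if n - 2 = 0 then 1 else if n - 2 = 1 then 1 - x else 0) else 0)
        - (if 3 \<le> n then x * (if n - 3 = 0 then 1 else if n - 3 = 1 then 1 - x else 0) else 0))"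
    proof -
      consider "n = 0" | "n = 1" | "n = 2" | "n = 3" | "n = 4" | "5 \<le> n" by linarith
      then show ?thesis
      proof cases
        case 6
        then have "n - 3 \<noteq> Suc 0" "n - 2 \<noteq> Suc 0" "n \<noteq> 0" "n \<noteq> 1" by auto
        then show ?thesis using rec[OF 6] 6 by simp
      qed (simp_all add: w0 w1[simplified] w2 w3 w4 power2_eq_square algebra_simps)
    qed
    show "(Abs_fps W * D) $ n = (2 + fps_X - Q * D) $ n"
      unfolding s a1 a2 a3 by (rule arith)
  qed
  have inv: "D * inverse D = 1" using D0 by (simp add: inverse_mult_eq_1')
  have "Abs_fps W = (Abs_fps W * D) * inverse D" using inv by (simp add: mult.assoc)
  also have "\<dots> = (2 + fps_X) * inverse D - Q" unfolding key using inv
    by (simp add: algebra_simps mult.assoc)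
  also have "\<dots> = (2 + fps_X) / D - Q" using D0 by (simp add: fps_divide_unit)
  finally show ?thesis unfolding D_def Q_def by simp
qed

lemma fps_padovan:
  "Abs_fps (\<lambda>n. real (padovan n)) =
            (1 + 2 * fps_X + 2 * fps_X ^ 2) / (1 - fps_X ^ 2 - fps_X ^ 3 :: real fps)"
proof -
  define D :: "real fps" where "D = 1 - fps_X ^ 2 - fps_X ^ 3"
  define A where "A = Abs_fps (\<lambda>n. real (padovan n))"
  have D0: "D $ 0 \<noteq> 0" unfolding D_def by simp
  have key: "A * D = 1 + 2 * fps_X + 2 * fps_X ^ 2"
  proof (rule fps_ext)
    fix n
    have c: "(A * D) $ n = real (padovan n) - (if 2 \<le> n then real (padovan (n - 2)) else 0)
       - (if 3 \<le> n then real (padovan (n - 3)) else 0)"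
      unfolding A_def D_def by (rule coeff_D2)
    have r: "(1 + 2 * fps_X + 2 * fps_X ^ 2 :: real fps) $ n = (if n = 0 then 1 else if n = 1 then 2 else if n = 2 then 2 else 0)"
      by (simp add: numeral_fps_const)
    have "n = 0 \<or> n = 1 \<or> n = 2 \<or> (\<exists>m. n = Suc (Suc (Suc m)))" by presburger
    then consider "n = 0" | "n = 1" | "n = 2" | m where "n = Suc (Suc (Suc m))"
      by blast
    then show "(A * D) $ n = (1 + 2 * fps_X + 2 * fps_X ^ 2 :: real fps) $ n"
      unfolding c r by cases (simp_all add: numeral_2_eq_2 numeral_3_eq_3)
  qed
  have inv: "D * inverse D = 1" using D0 by (simp add: inverse_mult_eq_1')
  have "A = (A * D) * inverse D" using inv by (simp add: mult.assoc)
  also have "\<dots> = (1 + 2 * fps_X + 2 * fps_X ^ 2) / D" unfolding key using D0 by (simp add: fps_divide_unit)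
  finally show ?thesis unfolding A_def D_def .
qed



definition Wt :: "nat \<Rightarrow> real \<Rightarrow> real" where
  "Wt n x = (\<Sum>G\<in>{G. VW n G}. x ^ card (AA n G))"

lemma finite_VW: "finite {G. VW n G}"
  by (rule finite_subset[of _ "Pow {1..n}"]) (auto simp: VW_def)

lemma AA_sub: "AA n G \<subseteq> {1..n}" by (auto simp: mem_AA)

lemma AA_notin: "n < a \<Longrightarrow> a \<notin> AA n G" by (simp add: mem_AA)

lemma finite_AA: "finite (AA n G)" using AA_sub finite_subset by blast

lemma h_eq: "h n k = card {G. VW n G \<and> card (AA n G) = k}"
  unfolding h_def omega_verts_eq card_maximal[OF cover_irr finite_atLeastAtMost] ValidS_eq AddS_eq VV_VW ..

lemma H_Wt: "H n x = Wt n x"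
proof -
  define S where "S = {G. VW n G}"
  define g where "g G = card (AA n G)" for G
  have finS: "finite S" unfolding S_def by (rule finite_VW)
  have hk: "h n k = card {G \<in> S. g G = k}" for k unfolding h_eq S_def g_def by simp
  have K: "{k. h n k \<noteq> 0} = g ` S"
  proof (rule set_eqI)
    fix k
    have fin: "finite {G \<in> S. g G = k}" using finS by simp
    have "h n k \<noteq> 0 \<longleftrightarrow> {G \<in> S. g G = k} \<noteq> {}" unfolding hk using fin by simp
    also have "\<dots> \<longleftrightarrow> k \<in> g ` S" by blast
    finally show "k \<in> {k. h n k \<noteq> 0} \<longleftrightarrow> k \<in> g ` S" by simp
  qed
  have "Wt n x = (\<Sum>G\<in>S. x ^ g G)" unfolding Wt_def S_def g_def by simp
  also have "\<dots> = (\<Sum>k\<in>g ` S. \<Sum>G\<in>{G. G \<in> S \<and> g G = k}. x ^ g G)"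
    by (rule sum.image_gen[OF finS])
  also have "\<dots> = (\<Sum>k\<in>g ` S. real (h n k) * x ^ k)"
  proof (rule sum.cong[OF refl])
    fix k assume "k \<in> g ` S"
    have "(\<Sum>G\<in>{G. G \<in> S \<and> g G = k}. x ^ g G) = (\<Sum>G\<in>{G. G \<in> S \<and> g G = k}. x ^ k)"
      by (rule sum.cong) auto
    also have "\<dots> = real (h n k) * x ^ k" unfolding hk by simp
    finally show "(\<Sum>G\<in>{G. G \<in> S \<and> g G = k}. x ^ g G) = real (h n k) * x ^ k" .
  qed
  also have "\<dots> = H n x" unfolding H_def K ..
  finally show ?thesis ..
qed

lemma sum_split_pred:
  assumes "finite S"
  shows "sum f S = sum f {G \<in> S. P G} + sum f {G \<in> S. \<not> P G}"
proof -
  have "S = {G \<in> S. P G} \<union> {G \<in> S. \<not> P G}" by auto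
  then have "sum f S = sum f ({G \<in> S. P G} \<union> {G \<in> S. \<not> P G})" by simp
  also have "\<dots> = sum f {G \<in> S. P G} + sum f {G \<in> S. \<not> P G}"
    by (rule sum.union_disjoint) (use assms in auto)
  finally show ?thesis .
qed

lemma sum_shift:
  fixes x :: real
  assumes "\<And>G. G \<in> A \<Longrightarrow> AA n (\<phi> G) = insert a (AA m G)" and "\<And>G. G \<in> A \<Longrightarrow> a \<notin> AA m G"
    and "inj_on \<phi> A"
  shows "(\<Sum>G\<in>\<phi> ` A. x ^ card (AA n G)) = x * (\<Sum>G\<in>A. x ^ card (AA m G))"
proof -
  have "(\<Sum>G\<in>\<phi> ` A. x ^ card (AA n G)) = (\<Sum>G\<in>A. x ^ card (AA n (\<phi> G)))"
    by (rule sum.reindex[OF assms(3), unfolded comp_def])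
  also have "\<dots> = (\<Sum>G\<in>A. x * x ^ card (AA m G))"
    by (rule sum.cong[OF refl]) (simp add: assms(1,2) finite_AA)
  also have "\<dots> = x * (\<Sum>G\<in>A. x ^ card (AA m G))" by (rule sum_distrib_left[symmetric])
  finally show ?thesis .
qed

lemma rec_even:
  assumes m: "odd m" "3 \<le> m"
  shows "Wt (m + 3) x = x * Wt (m + 1) x + x * Wt m x"
proof -
  have m1: "even (m + 1)" "4 \<le> m + 1" using m by presburger+
  define T where "T = {m + 1, m + 3}"
  have e: "m + 1 + 2 = m + 3" by simp
  have P1: "{G \<in> {G. VW (m + 3) G}. \<not> (m + 3 \<in> G)} = id ` {G. VW (m + 1) G}"
  proof -
    have "VW (m + 3) G \<and> m + 3 \<notin> G \<longleftrightarrow> VW (m + 1) G" for G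
    proof
      assume "VW (m + 3) G \<and> m + 3 \<notin> G"
      then show "VW (m + 1) G" using A2[OF m1, of G, unfolded e] by blast
    next
      assume H: "VW (m + 1) G"
      then show "VW (m + 3) G \<and> m + 3 \<notin> G" using A1[OF m1 H, unfolded e] VW_D(1)[OF H] by auto
    qed
    then show ?thesis by auto
  qed
  have P2: "{G \<in> {G. VW (m + 3) G}. m + 3 \<in> G} = (\<lambda>G. G \<union> T) ` {G. VW m G}"
  proof (rule set_eqI iffI)+
    fix G assume "G \<in> {G \<in> {G. VW (m + 3) G}. m + 3 \<in> G}"
    then have G: "VW (m + 3) G" "m + 3 \<in> G" by auto
    have "G = (G - T) \<union> T" using B2(1)[OF m G] G(2) unfolding T_def by auto
    moreover have "VW m (G - T)" using B2(2)[OF m G] unfolding T_def .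
    ultimately show "G \<in> (\<lambda>G. G \<union> T) ` {G. VW m G}" by blast
  next
    fix G assume "G \<in> (\<lambda>G. G \<union> T) ` {G. VW m G}"
    then obtain G0 where "VW m G0" "G = G0 \<union> T" by auto
    then show "G \<in> {G \<in> {G. VW (m + 3) G}. m + 3 \<in> G}" using B1[OF m] unfolding T_def by auto
  qed
  have inj: "inj_on (\<lambda>G. G \<union> T) {G. VW m G}"
  proof (rule inj_onI)
    fix G G' assume "G \<in> {G. VW m G}" "G' \<in> {G. VW m G}" "G \<union> T = G' \<union> T"
    moreover have "G \<inter> T = {}" "G' \<inter> T = {}" using calculation(1,2) VW_D(1) unfolding T_def by fastforce+
    ultimately show "G = G'" by blast
  qed
  have "Wt (m + 3) x = (\<Sum>G\<in>id ` {G. VW (m + 1) G}. x ^ card (AA (m + 3) G)) +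
      (\<Sum>G\<in>(\<lambda>G. G \<union> T) ` {G. VW m G}. x ^ card (AA (m + 3) G))"
    unfolding Wt_def sum_split_pred[OF finite_VW, where P = "\<lambda>G. \<not> (m + 3 \<in> G)"] P1 P2[symmetric] by simp
  also have "(\<Sum>G\<in>id ` {G. VW (m + 1) G}. x ^ card (AA (m + 3) G)) = x * Wt (m + 1) x"
    unfolding Wt_def
    by (rule sum_shift[where a = "m + 3"]) (use A3[OF m1, unfolded e] AA_notin in auto)
  also have "(\<Sum>G\<in>(\<lambda>G. G \<union> T) ` {G. VW m G}. x ^ card (AA (m + 3) G)) = x * Wt m x"
    unfolding Wt_def
    by (rule sum_shift[where a = "m + 2", OF _ _ inj]) (use B3[OF m] AA_notin in \<open>auto simp: T_def\<close>)
  finally show ?thesis .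
qed

lemma rec_odd:
  assumes m: "even m" "2 \<le> m"
  shows "Wt (m + 3) x = x * Wt m x + x * Wt (m + 1) x"
proof -
  have m1: "odd (m + 1)" "3 \<le> m + 1" using m by presburger+
  have e1: "m + 1 + 2 = m + 3" and e2: "m + 1 + 1 = m + 2" by simp_all
  have P1: "{G \<in> {G. VW (m + 3) G}. \<not> (m + 2 \<in> G)} = id ` {G. VW m G}"
  proof -
    have "VW (m + 3) G \<and> m + 2 \<notin> G \<longleftrightarrow> VW m G" for G
      using C1[OF m, of G] C2[OF m, of G] by auto
    then show ?thesis by auto
  qed
  have P2: "{G \<in> {G. VW (m + 3) G}. m + 2 \<in> G} = insert (m + 2) ` {G. VW (m + 1) G}"
  proof (rule set_eqI iffI)+
    fix G assume "G \<in> {G \<in> {G. VW (m + 3) G}. m + 2 \<in> G}"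
    then have G: "VW (m + 1 + 2) G" "m + 1 + 1 \<in> G" unfolding e1 e2 by auto
    have "G = insert (m + 2) (G - {m + 2})" using G(2) by auto
    moreover have "VW (m + 1) (G - {m + 2})" using D2[OF m1 G] unfolding e2 .
    ultimately show "G \<in> insert (m + 2) ` {G. VW (m + 1) G}" by blast
  next
    fix G assume "G \<in> insert (m + 2) ` {G. VW (m + 1) G}"
    then obtain G0 where "VW (m + 1) G0" "G = insert (m + 2) G0" by auto
    then show "G \<in> {G \<in> {G. VW (m + 3) G}. m + 2 \<in> G}" using D1[OF m1, of G0, unfolded e1 e2] by auto
  qed
  have inj: "inj_on (insert (m + 2)) {G. VW (m + 1) G}"
  proof (rule inj_onI)
    fix G G' assume "G \<in> {G. VW (m + 1) G}" "G' \<in> {G. VW (m + 1) G}" "insert (m + 2) G = insert (m + 2) G'"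
    moreover have "m + 2 \<notin> G" "m + 2 \<notin> G'" using calculation(1,2) VW_D(1) by fastforce+
    ultimately show "G = G'" by (metis insert_ident)
  qed
  have "Wt (m + 3) x = (\<Sum>G\<in>id ` {G. VW m G}. x ^ card (AA (m + 3) G)) +
      (\<Sum>G\<in>insert (m + 2) ` {G. VW (m + 1) G}. x ^ card (AA (m + 3) G))"
    unfolding Wt_def sum_split_pred[OF finite_VW, where P = "\<lambda>G. \<not> (m + 2 \<in> G)"] P1 P2[symmetric] by simp
  also have "(\<Sum>G\<in>id ` {G. VW m G}. x ^ card (AA (m + 3) G)) = x * Wt m x"
    unfolding Wt_def
    by (rule sum_shift[where a = "m + 2"]) (use C3[OF m] AA_notin in auto)
  also have "(\<Sum>G\<in>insert (m + 2) ` {G. VW (m + 1) G}. x ^ card (AA (m + 3) G)) = x * Wt (m + 1) x"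
    unfolding Wt_def
    by (rule sum_shift[where a = "m + 3", OF _ _ inj]) (use D3[OF m1, unfolded e1 e2] AA_notin in auto)
  finally show ?thesis .
qed

lemma Wt_rec: assumes "5 \<le> n" shows "Wt n x = x * Wt (n - 2) x + x * Wt (n - 3) x"
proof (cases "even n")
  case True
  define m where "m = n - 3"
  have m: "odd m" "3 \<le> m" "n = m + 3" "n - 2 = m + 1" "n - 3 = m" using True assms unfolding m_def by presburger+
  show ?thesis using rec_even[OF m(1,2)] m(3-5) by simp
next
  case False
  define m where "m = n - 3"
  have m: "even m" "2 \<le> m" "n = m + 3" "n - 2 = m + 1" "n - 3 = m" using False assms unfolding m_def by presburger+
  show ?thesis using rec_odd[OF m(1,2)] m(3-5) by simp
qed



lemma small_sub: assumes V: "VW n G" and n: "n \<le> 4" shows "G \<subseteq> {1, 2, 4}"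
proof
  fix b assume b: "b \<in> G"
  have "1 \<le> b" "b \<le> 4" using VW_D(1)[OF V] b n by auto
  then show "b \<in> {1, 2, 4}" using VW_D(2)[OF V b] by auto
qed

lemma set124: "G \<subseteq> {1, 2, 4::nat} \<Longrightarrow>
   G = (if 1 \<in> G then {1} else {}) \<union> (if 2 \<in> G then {2} else {}) \<union> (if 4 \<in> G then {4} else {})"
  by auto

lemma S0: "{G. VW 0 G} = {{}}"
  by (auto simp: VW_def)

lemma S1: "{G. VW 1 G} = {{}}"
proof (rule set_eqI iffI)+
  fix G assume "G \<in> {G. VW 1 G}"
  then have V: "VW 1 G" by simp
  have "G \<subseteq> {1}" using VW_D(1)[OF V] by auto
  moreover have "1 \<notin> G" using VW_D(4)[OF V] by auto
  ultimately show "G \<in> {{}}" by auto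
qed (auto simp: VW_def)

lemma S2: "{G. VW 2 G} = {{}, {1}}"
proof (rule set_eqI iffI)+
  fix G assume "G \<in> {G. VW 2 G}"
  then have V: "VW 2 G" by simp
  have "G \<subseteq> {1, 2}" using VW_D(1)[OF V] by auto
  moreover have "2 \<notin> G" using VW_D(5)[OF V] by auto
  ultimately have "G \<subseteq> {1}" by auto
  then show "G \<in> {{}, {1}}" by (auto simp: subset_singleton_iff)
qed (auto simp: VW_def)

lemma S3: "{G. VW 3 G} = {{}, {1}, {1, 2}}"
proof (rule set_eqI iffI)+
  fix G assume "G \<in> {G. VW 3 G}"
  then have V: "VW 3 G" by simp
  have sub: "G \<subseteq> {1, 2, 4}" using small_sub[OF V] by simp
  have "4 \<notin> G" using VW_D(1)[OF V] by auto
  moreover have "2 \<in> G \<Longrightarrow> 1 \<in> G" using VW_D(3)[OF V] .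
  ultimately show "G \<in> {{}, {1}, {1, 2}}" using set124[OF sub]
    by (cases "1 \<in> G"; cases "2 \<in> G") auto
qed (auto simp: VW_def)

lemma S4: "{G. VW 4 G} = {{}, {1}, {1, 2, 4}}"
proof (rule set_eqI iffI)+
  fix G assume "G \<in> {G. VW 4 G}"
  then have V: "VW 4 G" by simp
  have sub: "G \<subseteq> {1, 2, 4}" using small_sub[OF V] by simp
  have a: "2 \<in> G \<Longrightarrow> 1 \<in> G" using VW_D(3)[OF V] .
  have b: "2 \<in> G \<Longrightarrow> 4 \<in> G" using VW_D(6)[OF V] by simp
  have c: "4 \<in> G \<Longrightarrow> 2 \<in> G" using VW_D(7)[OF V, of 4] by simp
  show "G \<in> {{}, {1}, {1, 2, 4}}" using set124[OF sub] a b c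
    by (cases "1 \<in> G"; cases "2 \<in> G"; cases "4 \<in> G") auto
qed (auto simp: VW_def)

lemma Wt0: "Wt 0 x = 1"
proof -
  have "AA 0 {} = {}" by (auto simp: mem_AA)
  then show ?thesis unfolding Wt_def S0 by simp
qed

lemma Wt1: "Wt 1 x = x"
proof -
  have "AA 1 {} = {1}" by (auto simp: mem_AA)
  then show ?thesis unfolding Wt_def S1 by simp
qed

lemma Wt2: "Wt 2 x = 2 * x"
proof -
  have "AA 2 {} = {1}" "AA 2 {1} = {2}" by (auto simp: mem_AA; presburger)+
  then show ?thesis unfolding Wt_def S2 by simp
qed

lemma Wt3: "Wt 3 x = 3 * x"
proof -
  have "AA 3 {} = {1}" "AA 3 {1} = {2}" "AA 3 {1, 2} = {3}" by (auto simp: mem_AA; presburger)+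
  moreover have "{1::nat} \<noteq> {1, 2}" by auto
  ultimately show ?thesis unfolding Wt_def S3 by simp
qed

lemma Wt4: "Wt 4 x = 2 * x ^ 2 + x"
proof -
  have "AA 4 {} = {1, 4}" "AA 4 {1} = {2, 4}" "AA 4 {1, 2, 4} = {3}" by (auto simp: mem_AA; presburger)+
  moreover have "{1::nat} \<noteq> {1, 2, 4}" by auto
  ultimately show ?thesis unfolding Wt_def S4 by (simp add: power2_eq_square)
qed

theorem mainTheorem14:
  shows "(\<forall>x::real. Abs_fps (\<lambda>n. H n x) =
            (2 + fps_X) / (1 - fps_const x * fps_X ^ 2 * (1 + fps_X))
              - fps_const (1 - x) * fps_X - 1)
       \<and> Abs_fps (\<lambda>n. real (padovan n)) =
            (1 + 2 * fps_X + 2 * fps_X ^ 2) / (1 - fps_X ^ 2 - fps_X ^ 3 :: real fps)"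
proof (intro conjI allI)
  fix x :: real
  have "Abs_fps (\<lambda>n. H n x) = Abs_fps (\<lambda>n. Wt n x)" by (simp add: H_Wt)
  also have "\<dots> = (2 + fps_X) / (1 - fps_const x * fps_X ^ 2 * (1 + fps_X))
              - fps_const (1 - x) * fps_X - 1"
    by (rule fps_main) (simp_all add: Wt0 Wt1 Wt1[simplified] Wt2 Wt3 Wt4 Wt_rec)
  finally show "Abs_fps (\<lambda>n. H n x) = (2 + fps_X) / (1 - fps_const x * fps_X ^ 2 * (1 + fps_X))
              - fps_const (1 - x) * fps_X - 1" .
next
  show "Abs_fps (\<lambda>n. real (padovan n)) =
            (1 + 2 * fps_X + 2 * fps_X ^ 2) / (1 - fps_X ^ 2 - fps_X ^ 3 :: real fps)"
    by (rule fps_padovan)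
qed

end
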